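(* Let $n,k\in\mathbb{N}$ and $\alpha\in(0,\infty)$, and let $i\ne j$ in $[n]$, $\ell,m,s\in\mathbb{N}$. (i) $\mathbb{E}[(Z_{n,j})_\ell]=\frac{\alpha^{\overline{\ell}}k^\ell}{\alpha^\ell}$ and $\mathbb{E}[Z_{n,j}^s]=\sum_{\ell=1}^s {s\brace \ell}\frac{\alpha^{\overline{\ell}}k^\ell}{\alpha^\ell}$. (ii) $\mathbb{E}[(D_{n,j}^{\alpha})_\ell]=\frac{\alpha^{\overline{\ell}}(kn)_\ell}{(\alpha n)^{\overline{\ell}}}$ and $\mathbb{E}[(D_{n,j}^{\infty})_\ell]=\frac{(kn)_\ell}{n^\ell}$. (iii) $\mu_{s,\alpha}:=\mathbb{E}[(D_{n,j}^{\alpha})^s]=\sum_{\ell=1}^s{s\brace \ell}\frac{\alpha^{\overline{\ell}}(kn)_\ell}{(\alpha n)^{\overline{\ell}}}$ and $\mu_{s,\infty}:=\mathbb{E}[(D_{n,j}^{\infty})^s]=\sum_{\ell=1}^s{s\brace \ell}\frac{(kn)_\ell}{n^\ell}$. (iv) $\mathbb{E}[(D_{n,i}^{\alpha})_\ell(D_{n,j}^{\alpha})_m]=\frac{\alpha^{\overline{\ell}}\alpha^{\overline{m}}(kn)_{\ell+m}}{(\alpha n)^{\overline{\ell+m}}}$ and $\mathbb{E}[(D_{n,i}^{\infty})_\ell(D_{n,j}^{\infty})_m]=\frac{(kn)_{\ell+m}}{n^{\ell+m}}$. (v) If $\alpha=\alpha(n)\to\infty$ as $n\to\infty$ (with $k,s$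 fixed), then $\mu_{s,\alpha}=\mu_{s,\infty}+O(1/\alpha)$. (vi) As $n\to\infty$ (with $k,s$ fixed), $\mu_{s,\infty}=\sum_{\ell=1}^s{s\brace \ell}k^\ell+O(1/n)$.
   Context: Notation: $x^{\overline{y}}=x(x+1)\cdots(x+y-1)$ (rising factorial), $(a)_b=a(a-1)\cdots(a-b+1)$ (falling factorial), ${s\brace \ell}$ is the Stirling number of the second kind. $Z_{n,1},\dots,Z_{n,n}$ are IID with $P(Z_{n,j}=d)=\frac{\alpha^{\overline{d}}}{d!}\left(\frac{\alpha}{\alpha+k}\right)^{\alpha}\left(\frac{k}{\alpha+k}\right)^{d}$, $d\ge0$. A $k$-out map on $[n]$ is a map $M:[n]\to[n]^k$; the in-degree of vertex $j$ is the total number of coordinates, over all vertices and all $k$ labels, of the images equal to $j$. The random $k$-out map $M_{n,k}^{\alpha}$ has law $P(M_{n,k}^{\alpha}=M)=\prod_{j=1}^n \alpha^{\overline{d_j}}/(\alpha n)^{\overline{kn}}$, with $(d_1,\dots,d_n)$ the in-degree sequence of $M$; $M_{n,k}^{\infty}$ is the uniformly random $k$-out map on $[n]$. $(D_{n,1}^{\alpha},\dots,D_{n,n}^{\alpha})$ and $(D_{n,1}^{\infty},\dots,D_{n,n}^{\infty})$ are the in-degree sequences of $M_{n,k}^{\alpha}$ and $M_{n,k}^{\infty}$. *)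

theory Defs
  imports "HOL-Analysis.Analysis" "HOL-Combinatorics.Stirling" "HOL-Library.Landau_Symbols"
begin

text \<open>Falling factorial (a)_b = a(a-1)...(a-b+1). Rising factorial is the library's pochhammer.\<close>
definition falling :: "real \<Rightarrow> nat \<Rightarrow> real" where
  "falling a b = (\<Prod>i<b. a - of_nat i)"

text \<open>Point mass function of Z_{n,j} (negative binomial with parameters alpha, k).\<close>
definition Z_pmf :: "real \<Rightarrow> nat \<Rightarrow> nat \<Rightarrow> real" where
  "Z_pmf \<alpha> k d = pochhammer \<alpha> d / fact d * (\<alpha> / (\<alpha> + real k)) powr \<alpha>
                  * (real k / (\<alpha> + real k)) ^ d"

text \<open>k-out maps on [n] = {1..n}: M(v) = (M(v,1),...,M(v,k)).\<close>
definition kout_maps :: "nat \<Rightarrow> nat \<Rightarrow> (nat \<times> nat \<Rightarrow> nat) set" where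
  "kout_maps n k = ({1..n} \<times> {1..k}) \<rightarrow>\<^sub>E {1..n}"

definition indeg :: "nat \<Rightarrow> nat \<Rightarrow> (nat \<times> nat \<Rightarrow> nat) \<Rightarrow> nat \<Rightarrow> nat" where
  "indeg n k M j = card {p \<in> {1..n} \<times> {1..k}. M p = j}"

definition kout_prob :: "real \<Rightarrow> nat \<Rightarrow> nat \<Rightarrow> (nat \<times> nat \<Rightarrow> nat) \<Rightarrow> real" where
  "kout_prob \<alpha> n k M = (\<Prod>j\<in>{1..n}. pochhammer \<alpha> (indeg n k M j))
                          / pochhammer (\<alpha> * real n) (k * n)"

text \<open>Expectation of a functional of M^alpha_{n,k} and of the uniform M^infty_{n,k}.\<close>
definition E_alpha :: "real \<Rightarrow> nat \<Rightarrow> nat \<Rightarrow> ((nat \<times> nat \<Rightarrow> nat) \<Rightarrow> real) \<Rightarrow> real" where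
  "E_alpha \<alpha> n k g = (\<Sum>M\<in>kout_maps n k. kout_prob \<alpha> n k M * g M)"

definition E_unif :: "nat \<Rightarrow> nat \<Rightarrow> ((nat \<times> nat \<Rightarrow> nat) \<Rightarrow> real) \<Rightarrow> real" where
  "E_unif n k g = (\<Sum>M\<in>kout_maps n k. g M) / real (card (kout_maps n k))"

end

theory Submission
  imports Defs
begin


lemma falling_0[simp]: "falling x 0 = 1" by (simp add: falling_def)
lemma falling_Suc: "falling x (Suc l) = falling x l * (x - of_nat l)"
  by (simp add: falling_def)
lemma falling_plus1_Suc: "falling (x+1) (Suc l) = (x+1) * falling x l"
proof (induction l)
  case 0 then show ?case by (simp add: falling_Suc)
next
  case (Suc l) then show ?case by (simp add: falling_Suc algebra_simps)
qed
lemma falling_plus1: "falling (x+1) l = falling x l + of_nat l * falling x (l - 1)"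
proof (cases l)
  case 0 then show ?thesis by simp
next
  case (Suc l') then show ?thesis
    unfolding Suc falling_plus1_Suc by (simp add: falling_Suc algebra_simps)
qed
lemma falling_zero_less: "l > 0 \<Longrightarrow> falling 0 l = 0"
  unfolding falling_def by (rule prod_zero) (auto intro: bexI[of _ 0])
lemma falling_nat_zero: "l > n \<Longrightarrow> falling (real n) l = 0"
  unfolding falling_def by (rule prod_zero) (auto intro: bexI[of _ n])

lemma Stirling_falling:
  "(x::real) ^ s = (\<Sum>l\<le>s. real (Stirling s l) * falling x l)"
proof (induction s)
  case 0 then show ?case by simp
next
  case (Suc s)
  have "x ^ Suc s = (\<Sum>l\<le>s. real (Stirling s l) * (x * falling x l))"
    by (simp add: Suc sum_distrib_left algebra_simps)
  also have "\<dots> = (\<Sum>l\<le>s. real (Stirling s l) * falling x (Suc l)) +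
                  (\<Sum>l\<le>s. real (Stirling s l) * real l * falling x l)"
    by (simp add: falling_Suc sum.distrib[symmetric] algebra_simps)
  also have "\<dots> = (\<Sum>l\<le>Suc s. real (Stirling (Suc s) l) * falling x l)"
  proof -
    have a: "(\<Sum>l\<le>Suc s. real (Stirling (Suc s) l) * falling x l)
      = (\<Sum>l\<le>s. real (Stirling (Suc s) (Suc l)) * falling x (Suc l))"
      by (subst sum.atMost_Suc_shift) simp
    have b: "(\<Sum>l\<le>s. real (Stirling (Suc s) (Suc l)) * falling x (Suc l))
      = (\<Sum>l\<le>s. real (Suc l) * real (Stirling s (Suc l)) * falling x (Suc l))
        + (\<Sum>l\<le>s. real (Stirling s l) * falling x (Suc l))"
      by (simp add: sum.distrib[symmetric] algebra_simps)
    have c: "(\<Sum>l\<le>s. real (Suc l) * real (Stirling s (Suc l)) * falling x (Suc l))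
       = (\<Sum>l\<le>s. real (Stirling s l) * real l * falling x l)"
    proof -
      have "(\<Sum>l\<le>Suc s. real l * real (Stirling s l) * falling x l)
         = (\<Sum>l\<le>s. real (Suc l) * real (Stirling s (Suc l)) * falling x (Suc l))"
        by (subst sum.atMost_Suc_shift) simp
      moreover have "(\<Sum>l\<le>Suc s. real l * real (Stirling s l) * falling x l)
         = (\<Sum>l\<le>s. real l * real (Stirling s l) * falling x l)"
        by simp
      ultimately show ?thesis by (simp add: algebra_simps)
    qed
    show ?thesis using a b c by simp
  qed
  finally show ?case .
qed



definition rfe :: "real \<Rightarrow> real \<Rightarrow> nat \<Rightarrow> real" where
  "rfe e b d = (\<Prod>t<d. b + e * real t)"
definition dg :: "'a set \<Rightarrow> ('a \<Rightarrow> nat) \<Rightarrow> nat \<Rightarrow> nat" where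
  "dg A f x = card {p\<in>A. f p = x}"
definition FF :: "'a set \<Rightarrow> nat set \<Rightarrow> (nat \<Rightarrow> real) \<Rightarrow> real \<Rightarrow> nat \<Rightarrow> nat \<Rightarrow> nat \<Rightarrow> nat \<Rightarrow> real" where
  "FF A V \<beta> e i j l m = (\<Sum>f\<in>A \<rightarrow>\<^sub>E V. (\<Prod>x\<in>V. rfe e (\<beta> x) (dg A f x))
      * falling (real (dg A f i)) l * falling (real (dg A f j)) m)"

lemma rfe_0[simp]: "rfe e b 0 = 1" by (simp add: rfe_def)
lemma rfe_Suc: "rfe e b (Suc d) = rfe e b d * (b + e * real d)" by (simp add: rfe_def)

lemma dg_upd:
  assumes "p \<notin> A" "finite A"
  shows "dg (insert p A) (g(p:=y)) x = dg A g x + (if x = y then 1 else 0)"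
proof -
  have "{q\<in>insert p A. (g(p:=y)) q = x} = (if y = x then insert p {q\<in>A. g q = x} else {q\<in>A. g q = x})"
    using assms(1) by auto
  then show ?thesis using assms by (auto simp: dg_def)
qed

lemma sum_dg:
  assumes "f \<in> A \<rightarrow>\<^sub>E V" "finite A" "finite V"
  shows "(\<Sum>x\<in>V. real (dg A f x)) = real (card A)"
proof -
  have "real (dg A f x) = (\<Sum>p\<in>A. if f p = x then 1 else 0)" for x
    unfolding dg_def using assms(2) by (simp add: sum.If_cases Int_def conj_commute)
  then have "(\<Sum>x\<in>V. real (dg A f x)) = (\<Sum>p\<in>A. \<Sum>x\<in>V. if f p = x then 1 else 0)"
    by (simp add: sum.swap[of _ V])
  also have "\<dots> = (\<Sum>p\<in>A. 1)"
    using assms(1,3) by (intro sum.cong) (auto simp: sum.delta)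
  finally show ?thesis by simp
qed

lemma prod_upd:
  assumes "y \<in> V" "finite V"
  shows "(\<Prod>x\<in>V. rfe e (\<beta> x) (d x + (if x = y then 1 else 0)))
       = (\<Prod>x\<in>V. rfe e (\<beta> x) (d x)) * (\<beta> y + e * real (d y))"
proof -
  have "(\<Prod>x\<in>V. rfe e (\<beta> x) (d x + (if x = y then 1 else 0)))
      = (\<Prod>x\<in>V. rfe e (\<beta> x) (d x) * (if x = y then \<beta> y + e * real (d y) else 1))"
    by (intro prod.cong) (auto simp: rfe_Suc)
  also have "\<dots> = (\<Prod>x\<in>V. rfe e (\<beta> x) (d x)) * (\<beta> y + e * real (d y))"
    using assms by (simp add: prod.distrib prod.delta)
  finally show ?thesis .
qed

lemma falling_mult_self: "real d * falling (real d) (l - 1) = falling (real d) l + real (l - 1) * falling (real d) (l - 1)"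
  if "l > 0" for d l
proof -
  from that obtain l' where "l = Suc l'" by (cases l) auto
  then show ?thesis by (simp add: falling_Suc algebra_simps)
qed



lemma FF_insert:
  assumes finA: "finite A" and finV: "finite V" and p: "p \<notin> A"
    and ij: "i \<noteq> j" "j \<in> V" "0 < l \<Longrightarrow> i \<in> V"
  shows "FF (insert p A) V \<beta> e i j l m =
     (sum \<beta> V + e * real (card A) + e * real l + e * real m) * FF A V \<beta> e i j l m
     + real l * (\<beta> i + e * real (l - 1)) * FF A V \<beta> e i j (l - 1) m
     + real m * (\<beta> j + e * real (m - 1)) * FF A V \<beta> e i j l (m - 1)"
proof -
  define w where "w g = (\<Prod>x\<in>V. rfe e (\<beta> x) (dg A g x))" for g
  define Hh where "Hh f = (\<Prod>x\<in>V. rfe e (\<beta> x) (dg (insert p A) f x))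
      * falling (real (dg (insert p A) f i)) l * falling (real (dg (insert p A) f j)) m" for f
  define B where "B = sum \<beta> V"
  define N where "N = real (card A)"
  have key: "(\<Sum>y\<in>V. Hh (g(p:=y))) = w g * ((B + e*N + e*real l + e*real m)
        * falling (real (dg A g i)) l * falling (real (dg A g j)) m
      + real l * (\<beta> i + e * real (l - 1)) * falling (real (dg A g i)) (l - 1) * falling (real (dg A g j)) m
      + real m * (\<beta> j + e * real (m - 1)) * falling (real (dg A g i)) l * falling (real (dg A g j)) (m - 1))"
    if g: "g \<in> A \<rightarrow>\<^sub>E V" for g
  proof -
    define d where "d x = dg A g x" for x
    define a where "a = falling (real (d i)) l"
    define b where "b = falling (real (d j)) m"
    define P where "P = real l * falling (real (d i)) (l - 1)"
    define Q where "Q = real m * falling (real (d j)) (m - 1)"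
    define c where "c y = \<beta> y + e * real (d y)" for y
    have H: "Hh (g(p:=y)) = w g * (c y * a * b + (if y = i then c y * P * b else 0)
                + (if y = j then c y * a * Q else 0))" if y: "y \<in> V" for y
    proof -
      have dd: "dg (insert p A) (g(p:=y)) x = d x + (if x = y then 1 else 0)" for x
        unfolding d_def by (rule dg_upd[OF p finA])
      have fi: "falling (real (dg (insert p A) (g(p:=y)) i)) l = a + (if y = i then P else 0)"
        unfolding dd a_def P_def using falling_plus1[of "real (d i)" l] by (auto simp: add.commute)
      have fj: "falling (real (dg (insert p A) (g(p:=y)) j)) m = b + (if y = j then Q else 0)"
        unfolding dd b_def Q_def using falling_plus1[of "real (d j)" m] by (auto simp: add.commute)
      have pr: "(\<Prod>x\<in>V. rfe e (\<beta> x) (dg (insert p A) (g(p:=y)) x)) = w g * c y"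
        unfolding dd w_def c_def d_def by (rule prod_upd[OF y finV])
      show ?thesis unfolding Hh_def pr fi fj using ij(1)
        by (auto simp: algebra_simps)
    qed
    have sc: "(\<Sum>y\<in>V. c y) = B + e * N"
      using sum_dg[OF g finA finV] by (simp add: c_def sum.distrib B_def N_def d_def sum_distrib_left[symmetric])
    have ci: "c i * P = real l * (e * a + (\<beta> i + e * real (l - 1)) * falling (real (d i)) (l - 1))"
    proof (cases "l = 0")
      case True then show ?thesis by (simp add: P_def)
    next
      case False
      then obtain v' where "l = Suc v'" by (cases l) auto
      then show ?thesis unfolding c_def P_def a_def
        by (simp add: falling_Suc algebra_simps)
    qed
    have cj: "c j * Q = real m * (e * b + (\<beta> j + e * real (m - 1)) * falling (real (d j)) (m - 1))"
    proof (cases "m = 0")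
      case True then show ?thesis by (simp add: Q_def)
    next
      case False
      then obtain v' where "m = Suc v'" by (cases m) auto
      then show ?thesis unfolding c_def Q_def b_def
        by (simp add: falling_Suc algebra_simps)
    qed
    have "(\<Sum>y\<in>V. Hh (g(p:=y))) = (\<Sum>y\<in>V. w g * (c y * a * b + (if y = i then c y * P * b else 0)
                + (if y = j then c y * a * Q else 0)))"
      by (rule sum.cong) (auto simp: H)
    also have "\<dots> = w g * (\<Sum>y\<in>V. c y * a * b + (if y = i then c y * P * b else 0)
                + (if y = j then c y * a * Q else 0))"
      by (simp add: sum_distrib_left)
    also have "(\<Sum>y\<in>V. c y * a * b + (if y = i then c y * P * b else 0)
                + (if y = j then c y * a * Q else 0)) = (\<Sum>y\<in>V. c y) * a * b + (if i \<in> V then c i * P * b else 0) + c j * a * Q"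
      using finV ij(2) by (simp add: sum.distrib sum_distrib_right sum.delta)
    also have "(if i \<in> V then c i * P * b else 0) = c i * P * b"
      using ij(3) by (auto simp: P_def)
    finally have X: "(\<Sum>y\<in>V. Hh (g(p:=y))) = w g * ((\<Sum>y\<in>V. c y) * a * b + c i * P * b + c j * a * Q)" .
    have X2: "(\<Sum>y\<in>V. Hh (g(p:=y))) = w g * ((B + e * N) * a * b + (c i * P) * b + (c j * Q) * a)"
      by (simp only: X sc) (simp add: algebra_simps)
    show ?thesis unfolding X2 ci cj a_def b_def d_def by (simp add: algebra_simps)
  qed
  have "FF (insert p A) V \<beta> e i j l m = (\<Sum>(y,g)\<in>V \<times> (A \<rightarrow>\<^sub>E V). Hh (g(p:=y)))"
    unfolding FF_def PiE_insert_eq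
    by (subst sum.reindex[OF inj_combinator[OF p]]) (simp add: Hh_def split_beta)
  also have "\<dots> = (\<Sum>g\<in>A \<rightarrow>\<^sub>E V. \<Sum>y\<in>V. Hh (g(p:=y)))"
    by (simp add: sum.cartesian_product[symmetric] sum.swap[of _ V])
  also have "\<dots> = (\<Sum>g\<in>A \<rightarrow>\<^sub>E V. w g * ((B + e*N + e*real l + e*real m)
        * falling (real (dg A g i)) l * falling (real (dg A g j)) m
      + real l * (\<beta> i + e * real (l - 1)) * falling (real (dg A g i)) (l - 1) * falling (real (dg A g j)) m
      + real m * (\<beta> j + e * real (m - 1)) * falling (real (dg A g i)) l * falling (real (dg A g j)) (m - 1)))"
    by (rule sum.cong) (auto simp: key)
  also have "\<dots> = (sum \<beta> V + e * real (card A) + e * real l + e * real m) * FF A V \<beta> e i j l m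
     + real l * (\<beta> i + e * real (l - 1)) * FF A V \<beta> e i j (l - 1) m
     + real m * (\<beta> j + e * real (m - 1)) * FF A V \<beta> e i j l (m - 1)"
    unfolding FF_def w_def B_def N_def
    by (simp only: sum_distrib_left sum.distrib[symmetric]) (rule sum.cong, simp, simp add: algebra_simps)
  finally show ?thesis .
qed


lemma falling_identity:
  "(B + e*x + e*real L) * falling x L + real L * (B + e * real (L - 1)) * falling x (L - 1)
    = falling (x + 1) L * (B + e*x)"
proof (cases L)
  case 0 then show ?thesis by simp
next
  case (Suc L')
  have "falling (x + 1) L = (x+1) * falling x L'" unfolding Suc by (rule falling_plus1_Suc)
  then show ?thesis unfolding Suc by (simp add: falling_Suc algebra_simps)
qed

lemma FF_empty: "FF {} V \<beta> e i j l m = falling 0 l * falling 0 m"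
  by (simp add: FF_def dg_def)

lemma FF_closed:
  assumes finA: "finite A" and finV: "finite V"
    and ij: "i \<noteq> j" "j \<in> V" "0 < l \<Longrightarrow> i \<in> V"
  shows "FF A V \<beta> e i j l m * rfe e (sum \<beta> V) (l + m)
     = rfe e (\<beta> i) l * rfe e (\<beta> j) m * falling (real (card A)) (l + m) * rfe e (sum \<beta> V) (card A)"
  using finA ij(3)
proof (induction A arbitrary: l m rule: finite_induct)
  case empty
  show ?case
  proof (cases "l + m = 0")
    case True then show ?thesis by (simp add: FF_empty)
  next
    case False
    then have "falling 0 l * falling 0 m = 0" by (cases "l = 0") (auto simp: falling_zero_less)
    then show ?thesis using False by (simp add: FF_empty falling_zero_less)
  qed
next
  case (insert p A)
  define B where "B = sum \<beta> V"
  define N where "N = real (card A)"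
  define X where "X = rfe e (\<beta> i) l * rfe e (\<beta> j) m"
  have IH0: "FF A V \<beta> e i j l m * rfe e B (l + m)
     = X * falling N (l + m) * rfe e B (card A)"
    using insert.IH[of l m] insert.prems by (simp add: B_def N_def X_def)
  have T1: "real l * (\<beta> i + e * real (l - 1)) * FF A V \<beta> e i j (l - 1) m * rfe e B (l + m)
      = real l * X * falling N (l + m - 1) * rfe e B (card A) * (B + e * real (l + m - 1))"
  proof (cases l)
    case 0 then show ?thesis by simp
  next
    case (Suc l')
    have ih: "FF A V \<beta> e i j l' m * rfe e B (l' + m)
       = rfe e (\<beta> i) l' * rfe e (\<beta> j) m * falling N (l' + m) * rfe e B (card A)"
      using insert.IH[of l' m] insert.prems Suc by (simp add: B_def N_def)
    have "rfe e B (l + m) = rfe e B (l' + m) * (B + e * real (l' + m))"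
      using Suc by (simp add: rfe_Suc)
    moreover have "X = rfe e (\<beta> i) l' * (\<beta> i + e * real l') * rfe e (\<beta> j) m"
      using Suc by (simp add: X_def rfe_Suc)
    ultimately show ?thesis using ih Suc
      by (simp add: algebra_simps)
  qed
  have T2: "real m * (\<beta> j + e * real (m - 1)) * FF A V \<beta> e i j l (m - 1) * rfe e B (l + m)
      = real m * X * falling N (l + m - 1) * rfe e B (card A) * (B + e * real (l + m - 1))"
  proof (cases m)
    case 0 then show ?thesis by simp
  next
    case (Suc m')
    have ih: "FF A V \<beta> e i j l m' * rfe e B (l + m')
       = rfe e (\<beta> i) l * rfe e (\<beta> j) m' * falling N (l + m') * rfe e B (card A)"
      using insert.IH[of l m'] insert.prems Suc by (simp add: B_def N_def)
    have "rfe e B (l + m) = rfe e B (l + m') * (B + e * real (l + m'))"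
      using Suc by (simp add: rfe_Suc)
    moreover have "X = rfe e (\<beta> i) l * (rfe e (\<beta> j) m' * (\<beta> j + e * real m'))"
      using Suc by (simp add: X_def rfe_Suc)
    ultimately show ?thesis using ih Suc
      by (simp add: algebra_simps)
  qed
  have rec: "FF (insert p A) V \<beta> e i j l m =
     (B + e * N + e * real l + e * real m) * FF A V \<beta> e i j l m
     + real l * (\<beta> i + e * real (l - 1)) * FF A V \<beta> e i j (l - 1) m
     + real m * (\<beta> j + e * real (m - 1)) * FF A V \<beta> e i j l (m - 1)"
    unfolding B_def N_def by (rule FF_insert[OF insert.hyps(1) finV insert.hyps(2) ij(1,2) insert.prems])
  have "FF (insert p A) V \<beta> e i j l m * rfe e B (l + m)
     = (B + e * N + e * real (l + m)) * (FF A V \<beta> e i j l m * rfe e B (l + m))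
     + real l * (\<beta> i + e * real (l - 1)) * FF A V \<beta> e i j (l - 1) m * rfe e B (l + m)
     + real m * (\<beta> j + e * real (m - 1)) * FF A V \<beta> e i j l (m - 1) * rfe e B (l + m)"
    unfolding rec by (simp add: algebra_simps)
  also have "\<dots> = X * rfe e B (card A) * ((B + e*N + e*real (l+m)) * falling N (l + m)
      + real (l + m) * (B + e * real (l + m - 1)) * falling N (l + m - 1))"
    unfolding IH0 T1 T2 by (simp add: algebra_simps)
  also have "\<dots> = X * rfe e B (card A) * (falling (N + 1) (l + m) * (B + e * N))"
    by (simp only: falling_identity)
  also have "\<dots> = X * falling (real (card (insert p A))) (l + m) * rfe e B (card (insert p A))"
    using insert.hyps by (simp add: N_def rfe_Suc algebra_simps)
  finally show ?case by (simp add: B_def X_def)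
qed



lemma rfe_poch: "rfe 1 a d = pochhammer a d"
  by (simp add: rfe_def pochhammer_prod atLeast0LessThan)
lemma rfe_one: "rfe 0 1 d = 1" by (simp add: rfe_def)
lemma rfe_pow: "rfe 0 a d = a ^ d" by (simp add: rfe_def)

lemma indeg_dg: "indeg n k M j = dg ({1..n} \<times> {1..k}) M j"
  by (simp add: indeg_def dg_def)

lemma card_kout: "card (kout_maps n k) = n ^ (n * k)"
  by (simp add: kout_maps_def card_PiE card_cartesian_product)

lemma E_alpha_pair:
  assumes "\<alpha> > 0" "n \<ge> 1" "i \<noteq> j" "j \<in> {1..n}" "0 < l \<Longrightarrow> i \<in> {1..n}"
  shows "E_alpha \<alpha> n k (\<lambda>M. falling (real (indeg n k M i)) l * falling (real (indeg n k M j)) m)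
       = pochhammer \<alpha> l * pochhammer \<alpha> m * falling (real (k * n)) (l + m)
           / pochhammer (\<alpha> * real n) (l + m)"
proof -
  define A where "A = {1..n} \<times> {1..k}"
  have cl: "FF A {1..n} (\<lambda>_. \<alpha>) 1 i j l m * rfe 1 (sum (\<lambda>_. \<alpha>) {1..n}) (l + m)
     = rfe 1 \<alpha> l * rfe 1 \<alpha> m * falling (real (card A)) (l + m) * rfe 1 (sum (\<lambda>_. \<alpha>) {1..n}) (card A)"
    by (rule FF_closed) (use assms in \<open>auto simp: A_def\<close>)
  have s: "sum (\<lambda>_. \<alpha>) {1..n} = \<alpha> * real n" by simp
  have cA: "card A = k * n" by (simp add: A_def card_cartesian_product)
  have pos: "pochhammer (\<alpha> * real n) d > 0" for d
    using assms by (intro pochhammer_pos) simp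
  have E: "E_alpha \<alpha> n k (\<lambda>M. falling (real (indeg n k M i)) l * falling (real (indeg n k M j)) m)
      = FF A {1..n} (\<lambda>_. \<alpha>) 1 i j l m / pochhammer (\<alpha> * real n) (k * n)"
    unfolding E_alpha_def FF_def kout_prob_def kout_maps_def indeg_dg A_def rfe_poch
    by (simp add: sum_divide_distrib mult.assoc)
  show ?thesis unfolding E using cl pos[of "l+m"] pos[of "k*n"]
    by (simp add: s cA rfe_poch field_simps)
qed

lemma E_unif_pair:
  assumes "n \<ge> 1" "i \<noteq> j" "j \<in> {1..n}" "0 < l \<Longrightarrow> i \<in> {1..n}"
  shows "E_unif n k (\<lambda>M. falling (real (indeg n k M i)) l * falling (real (indeg n k M j)) m)
       = falling (real (k * n)) (l + m) / real n ^ (l + m)"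
proof -
  define A where "A = {1..n} \<times> {1..k}"
  have cl: "FF A {1..n} (\<lambda>_. 1) 0 i j l m * rfe 0 (sum (\<lambda>_. 1) {1..n}) (l + m)
     = rfe 0 1 l * rfe 0 1 m * falling (real (card A)) (l + m) * rfe 0 (sum (\<lambda>_. 1) {1..n}) (card A)"
    by (rule FF_closed) (use assms in \<open>auto simp: A_def\<close>)
  have s: "sum (\<lambda>_. 1::real) {1..n} = real n" by simp
  have cA: "card A = k * n" by (simp add: A_def card_cartesian_product)
  have E: "E_unif n k (\<lambda>M. falling (real (indeg n k M i)) l * falling (real (indeg n k M j)) m)
      = FF A {1..n} (\<lambda>_. 1) 0 i j l m / real n ^ (k * n)"
    unfolding E_unif_def FF_def card_kout indeg_dg A_def rfe_one
    by (simp add: kout_maps_def mult.commute)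
  show ?thesis unfolding E using cl assms(1)
    by (simp add: s cA rfe_pow rfe_one field_simps)
qed



lemma Stirling_s0: "s \<ge> 1 \<Longrightarrow> Stirling s 0 = 0" by (cases s) auto

lemma sum_Stirling_1: "s \<ge> 1 \<Longrightarrow> (\<Sum>l\<le>s. real (Stirling s l) * f l) = (\<Sum>l=1..s. real (Stirling s l) * f l)"
  by (simp add: atMost_atLeast0 sum.atLeast_Suc_atMost Stirling_s0)

lemma E_alpha_lin: "E_alpha \<alpha> n k (\<lambda>M. \<Sum>l\<in>S. c l * g l M) = (\<Sum>l\<in>S. c l * E_alpha \<alpha> n k (g l))"
  unfolding E_alpha_def by (simp add: sum_distrib_left sum.swap[of _ S] algebra_simps)
lemma E_unif_lin: "E_unif n k (\<lambda>M. \<Sum>l\<in>S. c l * g l M) = (\<Sum>l\<in>S. c l * E_unif n k (g l))"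
  unfolding E_unif_def by (simp add: sum_distrib_left sum.swap[of _ S] sum_divide_distrib algebra_simps)

lemma E_alpha_single:
  assumes "\<alpha> > 0" "n \<ge> 1" "j \<in> {1..n}"
  shows "E_alpha \<alpha> n k (\<lambda>M. falling (real (indeg n k M j)) l)
       = pochhammer \<alpha> l * falling (real (k * n)) l / pochhammer (\<alpha> * real n) l"
  using E_alpha_pair[of \<alpha> n 0 j 0 k l] assms by simp

lemma E_unif_single:
  assumes "n \<ge> 1" "j \<in> {1..n}"
  shows "E_unif n k (\<lambda>M. falling (real (indeg n k M j)) l)
       = falling (real (k * n)) l / real n ^ l"
  using E_unif_pair[of n 0 j 0 k l] assms by simp

lemma E_alpha_pow:
  assumes "\<alpha> > 0" "n \<ge> 1" "j \<in> {1..n}" "s \<ge> 1"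
  shows "E_alpha \<alpha> n k (\<lambda>M. real (indeg n k M j) ^ s)
       = (\<Sum>l'=1..s. real (Stirling s l') * pochhammer \<alpha> l' * falling (real (k * n)) l'
                       / pochhammer (\<alpha> * real n) l')"
proof -
  have "E_alpha \<alpha> n k (\<lambda>M. real (indeg n k M j) ^ s)
      = E_alpha \<alpha> n k (\<lambda>M. \<Sum>l\<le>s. real (Stirling s l) * falling (real (indeg n k M j)) l)"
    by (simp only: Stirling_falling)
  also have "\<dots> = (\<Sum>l\<le>s. real (Stirling s l) * (pochhammer \<alpha> l * falling (real (k * n)) l / pochhammer (\<alpha> * real n) l))"
    by (simp only: E_alpha_lin E_alpha_single[OF assms(1-3)])
  also have "\<dots> = (\<Sum>l=1..s. real (Stirling s l) * (pochhammer \<alpha> l * falling (real (k * n)) l / pochhammer (\<alpha> * real n) l))"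
    by (rule sum_Stirling_1[OF assms(4)])
  finally show ?thesis by (simp add: mult.assoc)
qed

lemma E_unif_pow:
  assumes "n \<ge> 1" "j \<in> {1..n}" "s \<ge> 1"
  shows "E_unif n k (\<lambda>M. real (indeg n k M j) ^ s)
       = (\<Sum>l'=1..s. real (Stirling s l') * falling (real (k * n)) l' / real n ^ l')"
proof -
  have "E_unif n k (\<lambda>M. real (indeg n k M j) ^ s)
      = E_unif n k (\<lambda>M. \<Sum>l\<le>s. real (Stirling s l) * falling (real (indeg n k M j)) l)"
    by (simp only: Stirling_falling)
  also have "\<dots> = (\<Sum>l\<le>s. real (Stirling s l) * (falling (real (k * n)) l / real n ^ l))"
    by (simp only: E_unif_lin E_unif_single[OF assms(1-2)])
  also have "\<dots> = (\<Sum>l=1..s. real (Stirling s l) * (falling (real (k * n)) l / real n ^ l))"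
    by (rule sum_Stirling_1[OF assms(3)])
  finally show ?thesis by simp
qed

lemma falling_fact: "falling (real (e + l)) l * fact e = fact (e + l)"
proof (induction l)
  case 0 then show ?case by simp
next
  case (Suc l)
  have r: "real (e + Suc l) = real (e + l) + 1" by simp
  have "falling (real (e + Suc l)) (Suc l) * fact e = (real (e + l) + 1) * (falling (real (e + l)) l * fact e)"
    unfolding r falling_plus1_Suc by simp
  also have "\<dots> = (real (e + l) + 1) * fact (e + l)" using Suc.IH by simp
  also have "\<dots> = fact (e + Suc l)" by (simp add: algebra_simps)
  finally show ?case .
qed

lemma poch_series:
  assumes "0 \<le> x" "x < (1::real)"
  shows "(\<lambda>e. pochhammer b e / fact e * x ^ e) sums ((1 - x) powr (- b))"
proof -
  have "\<bar>-x\<bar> < 1" using assms by simp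
  from gen_binomial_real[OF this, of "-b"]
  have "(\<lambda>e. ((-b) gchoose e) * (-x) ^ e) sums ((1 + -x) powr (-b))" .
  moreover have "((-b) gchoose e) * (-x) ^ e = pochhammer b e / fact e * x ^ e" for e
  proof -
    have m: "(-1::real) ^ e * (-1) ^ e = 1" by (simp flip: power_mult_distrib)
    have "((-b) gchoose e) * (-x) ^ e = ((-1) ^ e * (-1) ^ e) * (pochhammer b e / fact e * x ^ e)"
      by (simp only: gbinomial_pochhammer power_minus[of x] minus_minus times_divide_eq_left times_divide_eq_right mult_ac)
    then show ?thesis by (simp only: m mult_1_left)
  qed
  ultimately show ?thesis by simp
qed

lemma Z_falling:
  assumes a: "\<alpha> > 0" and k: "k \<ge> 1"
  shows "(\<lambda>d. Z_pmf \<alpha> k d * falling (real d) l) sums (pochhammer \<alpha> l * real k ^ l / \<alpha> ^ l)"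
proof -
  define x where "x = real k / (\<alpha> + real k)"
  define c where "c = (\<alpha> / (\<alpha> + real k)) powr \<alpha>"
  have x0: "0 \<le> x" and x1: "x < 1" using a k by (auto simp: x_def)
  have omx: "1 - x = \<alpha> / (\<alpha> + real k)" using a k by (simp add: x_def field_simps)
  have ser: "(\<lambda>e. pochhammer (\<alpha> + real l) e / fact e * x ^ e) sums ((1 - x) powr (- (\<alpha> + real l)))"
    by (rule poch_series[OF x0 x1])
  have tm: "Z_pmf \<alpha> k (e + l) * falling (real (e + l)) l
      = (c * x ^ l * pochhammer \<alpha> l) * (pochhammer (\<alpha> + real l) e / fact e * x ^ e)" for e
  proof -
    have "pochhammer \<alpha> (e + l) = pochhammer \<alpha> l * pochhammer (\<alpha> + real l) e"
      using pochhammer_product'[of \<alpha> l e] by (simp add: add.commute)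
    moreover have "falling (real (e + l)) l = fact (e + l) / fact e"
      using falling_fact[of e l] by (simp add: field_simps)
    ultimately show ?thesis unfolding Z_pmf_def
      by (simp only:) (simp add: x_def c_def power_add field_simps)
  qed
  have "(\<lambda>e. Z_pmf \<alpha> k (e + l) * falling (real (e + l)) l)
      sums ((c * x ^ l * pochhammer \<alpha> l) * (1 - x) powr (- (\<alpha> + real l)))"
    unfolding tm by (rule sums_mult[OF ser])
  then have S: "(\<lambda>d. Z_pmf \<alpha> k d * falling (real d) l)
      sums ((c * x ^ l * pochhammer \<alpha> l) * (1 - x) powr (- (\<alpha> + real l)))"
    by (subst (asm) sums_zero_iff_shift[of l "\<lambda>d. Z_pmf \<alpha> k d * falling (real d) l"])
       (auto simp: falling_nat_zero)
  have pos: "\<alpha> / (\<alpha> + real k) > 0" using a k by simp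
  have "c * (1 - x) powr (- (\<alpha> + real l)) = (\<alpha> / (\<alpha> + real k)) powr (\<alpha> + - (\<alpha> + real l))"
    unfolding c_def omx by (simp only: powr_add)
  also have "\<dots> = ((\<alpha> + real k) / \<alpha>) ^ l"
    using pos a k by (simp add: powr_minus powr_realpow power_divide field_simps)
  finally have cc: "c * (1 - x) powr (- (\<alpha> + real l)) = ((\<alpha> + real k) / \<alpha>) ^ l" .
  have "(c * x ^ l * pochhammer \<alpha> l) * (1 - x) powr (- (\<alpha> + real l))
      = pochhammer \<alpha> l * (x * ((\<alpha> + real k) / \<alpha>)) ^ l"
  proof -
    have "(c * x ^ l * pochhammer \<alpha> l) * (1 - x) powr (- (\<alpha> + real l))
      = pochhammer \<alpha> l * x ^ l * (c * (1 - x) powr (- (\<alpha> + real l)))" by (simp only: mult_ac)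
    also have "\<dots> = pochhammer \<alpha> l * (x * ((\<alpha> + real k) / \<alpha>)) ^ l"
      unfolding cc power_mult_distrib by (simp only: mult_ac)
    finally show ?thesis .
  qed
  also have "x * ((\<alpha> + real k) / \<alpha>) = real k / \<alpha>"
  proof -
    have "\<alpha> + real k \<noteq> 0" using a by simp
    then show ?thesis using a by (simp add: x_def)
  qed
  finally show ?thesis using S by (simp add: power_divide)
qed

lemma Z_pow:
  assumes a: "\<alpha> > 0" and k: "k \<ge> 1" and s: "s \<ge> 1"
  shows "(\<lambda>d. Z_pmf \<alpha> k d * real d ^ s)
        sums (\<Sum>l'=1..s. real (Stirling s l') * (pochhammer \<alpha> l' * real k ^ l' / \<alpha> ^ l'))"
proof -
  have "(\<lambda>d. \<Sum>l\<le>s. real (Stirling s l) * (Z_pmf \<alpha> k d * falling (real d) l))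
     sums (\<Sum>l\<le>s. real (Stirling s l) * (pochhammer \<alpha> l * real k ^ l / \<alpha> ^ l))"
    by (intro sums_sum sums_mult Z_falling[OF a k])
  moreover have "(\<lambda>d. \<Sum>l\<le>s. real (Stirling s l) * (Z_pmf \<alpha> k d * falling (real d) l)) = (\<lambda>d. Z_pmf \<alpha> k d * real d ^ s)"
    by (rule ext, subst Stirling_falling[of "real d" s], simp add: sum_distrib_left mult_ac)
  ultimately show ?thesis unfolding sum_Stirling_1[OF s] by simp
qed



lemma bA:
  assumes k: "k \<ge> (1::nat)"
  shows "\<exists>C. \<forall>N::nat. N \<ge> l \<longrightarrow> N \<ge> 1 \<longrightarrow>
     0 \<le> falling (real (k*N)) l / real N ^ l \<and> falling (real (k*N)) l / real N ^ l \<le> real k ^ l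
     \<and> \<bar>falling (real (k*N)) l / real N ^ l - real k ^ l\<bar> \<le> C / real N"
proof (induction l)
  case 0 then show ?case by (intro exI[of _ 0]) simp
next
  case (Suc l)
  then obtain C where C: "\<And>N. N \<ge> l \<Longrightarrow> N \<ge> 1 \<Longrightarrow>
     0 \<le> falling (real (k*N)) l / real N ^ l \<and> falling (real (k*N)) l / real N ^ l \<le> real k ^ l
     \<and> \<bar>falling (real (k*N)) l / real N ^ l - real k ^ l\<bar> \<le> C / real N" by blast
  show ?case
  proof (intro exI[of _ "C * real k + real k ^ l * real l"] allI impI)
    fix N :: nat assume N: "Suc l \<le> N" "1 \<le> N"
    define b where "b = falling (real (k*N)) l / real N ^ l"
    define q where "q = real k - real l / real N"
    have Np: "real N > 0" using N by simp
    have bb: "0 \<le> b" "b \<le> real k ^ l" "\<bar>b - real k ^ l\<bar> \<le> C / real N"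
      using C[of N] N by (auto simp: b_def)
    have C0: "0 \<le> C / real N" using bb(3) by linarith
    have eq: "falling (real (k*N)) (Suc l) / real N ^ Suc l = b * q"
      unfolding b_def q_def falling_Suc using Np by (simp add: field_simps)
    have lN: "real l \<le> real N" using N by simp
    have q0: "0 \<le> q" and qk: "q \<le> real k"
    proof -
      have "real l / real N \<le> 1" using lN Np by simp
      moreover have "1 \<le> real k" using k by simp
      ultimately show "0 \<le> q" by (simp add: q_def)
      show "q \<le> real k" using Np by (simp add: q_def)
    qed
    have kq: "real k - q = real l / real N" by (simp add: q_def)
    have "b * q \<le> real k ^ l * real k" by (rule mult_mono) (use bb q0 qk in auto)
    moreover have "0 \<le> b * q" using bb q0 by simp
    moreover have "\<bar>b * q - real k ^ Suc l\<bar> \<le> (C * real k + real k ^ l * real l) / real N"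
    proof -
      have "b * q - real k ^ Suc l = (b - real k ^ l) * q - real k ^ l * (real k - q)"
        by (simp add: algebra_simps)
      then have t: "\<bar>b * q - real k ^ Suc l\<bar> \<le> \<bar>(b - real k ^ l) * q\<bar> + \<bar>real k ^ l * (real k - q)\<bar>"
        by (simp only: abs_triangle_ineq4)
      have t1: "\<bar>(b - real k ^ l) * q\<bar> = \<bar>b - real k ^ l\<bar> * q" using q0 by (simp add: abs_mult)
      have t2: "\<bar>real k ^ l * (real k - q)\<bar> = real k ^ l * (real k - q)" using qk by simp
      have "\<bar>b * q - real k ^ Suc l\<bar> \<le> \<bar>b - real k ^ l\<bar> * q + real k ^ l * (real k - q)"
        using t unfolding t1 t2 .
      also have "\<dots> \<le> (C / real N) * real k + real k ^ l * (real l / real N)"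
        unfolding kq by (intro add_mono mult_mono) (use bb q0 qk C0 in auto)
      also have "\<dots> = (C * real k + real k ^ l * real l) / real N" by (simp add: add_divide_distrib)
      finally show ?thesis .
    qed
    ultimately show "0 \<le> falling (real (k*N)) (Suc l) / real N ^ Suc l \<and>
      falling (real (k*N)) (Suc l) / real N ^ Suc l \<le> real k ^ Suc l \<and>
      \<bar>falling (real (k*N)) (Suc l) / real N ^ Suc l - real k ^ Suc l\<bar> \<le> (C * real k + real k ^ l * real l) / real N"
      unfolding eq by (simp add: mult.commute)
  qed
qed

lemma bB:
  "\<exists>D\<ge>0. \<forall>\<alpha>::real. \<forall>N::nat. \<alpha> \<ge> 1 \<longrightarrow> N \<ge> 1 \<longrightarrow>
     1 \<le> pochhammer \<alpha> l * real N ^ l / pochhammer (\<alpha> * real N) l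
   \<and> pochhammer \<alpha> l * real N ^ l / pochhammer (\<alpha> * real N) l \<le> 1 + D / \<alpha>"
proof (induction l)
  case 0 then show ?case by (intro exI[of _ 0]) simp
next
  case (Suc l)
  then obtain D where D0: "D \<ge> 0" and D: "\<And>\<alpha> N. \<alpha> \<ge> 1 \<Longrightarrow> N \<ge> 1 \<Longrightarrow>
     1 \<le> pochhammer \<alpha> l * real N ^ l / pochhammer (\<alpha> * real N) l
   \<and> pochhammer \<alpha> l * real N ^ l / pochhammer (\<alpha> * real N) l \<le> 1 + D / \<alpha>" by blast
  show ?case
  proof (intro exI[of _ "D + real l + D * real l"] conjI allI impI)
    show "0 \<le> D + real l + D * real l" using D0 by simp
    fix \<alpha> :: real and N :: nat assume a: "1 \<le> \<alpha>" and N: "1 \<le> N"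
    define P where "P = pochhammer \<alpha> l * real N ^ l / pochhammer (\<alpha> * real N) l"
    define r where "r = (\<alpha> + real l) * real N / (\<alpha> * real N + real l)"
    have Np: "real N \<ge> 1" using N by simp
    have PP: "1 \<le> P" "P \<le> 1 + D / \<alpha>" using D[OF a N] by (auto simp: P_def)
    have den: "\<alpha> * real N + real l > 0" using a Np by (simp add: add_pos_nonneg)
    have pp: "pochhammer (\<alpha> * real N) l > 0" using a Np by (intro pochhammer_pos) simp
    have eq: "pochhammer \<alpha> (Suc l) * real N ^ Suc l / pochhammer (\<alpha> * real N) (Suc l) = P * r"
      unfolding P_def r_def pochhammer_Suc using pp den by (simp add: field_simps)
    have r1: "1 \<le> r"
    proof -
      have "\<alpha> * real N + real l \<le> (\<alpha> + real l) * real N" using Np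
        using mult_left_mono[OF Np, of "real l"] by (simp add: algebra_simps)
      then show ?thesis using den by (simp add: r_def)
    qed
    have r2: "r \<le> 1 + real l / \<alpha>"
    proof -
      have "r \<le> (\<alpha> + real l) * real N / (\<alpha> * real N)"
        unfolding r_def using a Np den by (intro divide_left_mono) (auto intro: mult_pos_pos)
      also have "\<dots> = 1 + real l / \<alpha>" using a Np by (simp add: field_simps)
      finally show ?thesis .
    qed
    have "P * r \<le> (1 + D / \<alpha>) * (1 + real l / \<alpha>)"
      by (rule mult_mono) (use PP r1 r2 in auto)
    also have "\<dots> = 1 + (D + real l) / \<alpha> + D * real l / (\<alpha> * \<alpha>)" using a by (simp add: field_simps)
    also have "\<dots> \<le> 1 + (D + real l) / \<alpha> + D * real l / \<alpha>"
    proof -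
      have "D * real l / (\<alpha> * \<alpha>) \<le> D * real l / \<alpha>"
        using a D0 by (intro divide_left_mono) (auto simp: mult_nonneg_nonneg)
      then show ?thesis by simp
    qed
    also have "\<dots> = 1 + (D + real l + D * real l) / \<alpha>" by (simp add: add_divide_distrib)
    finally show "pochhammer \<alpha> (Suc l) * real N ^ Suc l / pochhammer (\<alpha> * real N) (Suc l)
        \<le> 1 + (D + real l + D * real l) / \<alpha>" unfolding eq .
    show "1 \<le> pochhammer \<alpha> (Suc l) * real N ^ Suc l / pochhammer (\<alpha> * real N) (Suc l)"
      unfolding eq using PP r1 by (metis mult_mono' mult.right_neutral order.trans zero_le_one)
  qed
qed



lemma termv:
  fixes \<alpha> :: real and N :: nat
  assumes a: "\<alpha> \<ge> 1" and N: "N \<ge> 1"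
    and b0: "0 \<le> falling x l / real N ^ l" and bK: "falling x l / real N ^ l \<le> K"
    and P1: "1 \<le> pochhammer \<alpha> l * real N ^ l / pochhammer (\<alpha> * real N) l"
    and P2: "pochhammer \<alpha> l * real N ^ l / pochhammer (\<alpha> * real N) l \<le> 1 + D / \<alpha>"
  shows "\<bar>pochhammer \<alpha> l * falling x l / pochhammer (\<alpha> * real N) l - falling x l / real N ^ l\<bar> \<le> K * (D / \<alpha>)"
proof -
  define b where "b = falling x l / real N ^ l"
  define P where "P = pochhammer \<alpha> l * real N ^ l / pochhammer (\<alpha> * real N) l"
  have pp: "pochhammer (\<alpha> * real N) l > 0" using a N by (intro pochhammer_pos) simp
  have Nl: "real N ^ l > 0" using N by simp
  have eq: "pochhammer \<alpha> l * falling x l / pochhammer (\<alpha> * real N) l - falling x l / real N ^ l = b * (P - 1)"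
    unfolding b_def P_def using pp Nl by (simp add: field_simps)
  have "b * (P - 1) \<le> K * (D / \<alpha>)"
    by (rule mult_mono) (use b0 bK P1 P2 in \<open>auto simp: b_def P_def\<close>)
  moreover have "0 \<le> b * (P - 1)" by (intro mult_nonneg_nonneg) (use b0 P1 in \<open>auto simp: b_def P_def\<close>)
  ultimately show ?thesis unfolding eq by simp
qed

lemma part_v:
  fixes k s :: nat
  assumes k: "k \<ge> 1" and s: "s \<ge> 1"
  shows "\<forall>a :: nat \<Rightarrow> real. \<forall>jn :: nat \<Rightarrow> nat.
        (\<forall>N. a N > 0) \<longrightarrow> filterlim a at_top sequentially \<longrightarrow> (\<forall>N\<ge>1. jn N \<in> {1..N}) \<longrightarrow>
        (\<lambda>N. E_alpha (a N) N k (\<lambda>M. real (indeg N k M (jn N)) ^ s)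
              - E_unif N k (\<lambda>M. real (indeg N k M (jn N)) ^ s)) \<in> O(\<lambda>N. 1 / a N)"
proof (intro allI impI)
  fix a :: "nat \<Rightarrow> real" and jn :: "nat \<Rightarrow> nat"
  assume apos: "\<forall>N. a N > 0" and alim: "filterlim a at_top sequentially" and jn: "\<forall>N\<ge>1. jn N \<in> {1..N}"
  define PC where "PC = (\<lambda>(l::nat) (C::real). \<forall>N::nat. N \<ge> l \<longrightarrow> N \<ge> 1 \<longrightarrow>
     0 \<le> falling (real (k*N)) l / real N ^ l \<and> falling (real (k*N)) l / real N ^ l \<le> real k ^ l
     \<and> \<bar>falling (real (k*N)) l / real N ^ l - real k ^ l\<bar> \<le> C / real N)"
  have "\<forall>l. \<exists>C. PC l C" unfolding PC_def by (rule allI, rule bA[OF k])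
  then have "\<exists>C. \<forall>l. PC l (C l)" by (rule choice)
  then obtain C where C1: "\<forall>l. PC l (C l)" by (rule exE)
  have C0: "\<forall>l. \<forall>N::nat. N \<ge> l \<longrightarrow> N \<ge> 1 \<longrightarrow>
     0 \<le> falling (real (k*N)) l / real N ^ l \<and> falling (real (k*N)) l / real N ^ l \<le> real k ^ l
     \<and> \<bar>falling (real (k*N)) l / real N ^ l - real k ^ l\<bar> \<le> C l / real N"
    using C1 unfolding PC_def .
  note C = C0[rule_format]
  define PD where "PD = (\<lambda>(l::nat) (D::real). D \<ge> 0 \<and> (\<forall>\<alpha>::real. \<forall>N::nat. \<alpha> \<ge> 1 \<longrightarrow> N \<ge> 1 \<longrightarrow>
     1 \<le> pochhammer \<alpha> l * real N ^ l / pochhammer (\<alpha> * real N) l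
   \<and> pochhammer \<alpha> l * real N ^ l / pochhammer (\<alpha> * real N) l \<le> 1 + D / \<alpha>))"
  have "\<forall>l. \<exists>D. PD l D" unfolding PD_def by (rule allI, rule bB)
  then have "\<exists>D. \<forall>l. PD l (D l)" by (rule choice)
  then obtain D where D1: "\<forall>l. PD l (D l)" by (rule exE)
  have D0: "\<forall>l. D l \<ge> 0 \<and> (\<forall>\<alpha>::real. \<forall>N::nat. \<alpha> \<ge> 1 \<longrightarrow> N \<ge> 1 \<longrightarrow>
     1 \<le> pochhammer \<alpha> l * real N ^ l / pochhammer (\<alpha> * real N) l
   \<and> pochhammer \<alpha> l * real N ^ l / pochhammer (\<alpha> * real N) l \<le> 1 + D l / \<alpha>)"
    using D1 unfolding PD_def .
  note D = D0[rule_format, THEN conjunct2, rule_format]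
  define K where "K = (\<Sum>l=1..s. real (Stirling s l) * (real k ^ l * D l))"
  have "\<forall>Z. eventually (\<lambda>N. Z \<le> a N) sequentially"
    using alim unfolding filterlim_at_top .
  then have ev1: "eventually (\<lambda>N. a N \<ge> 1) sequentially" by (rule spec)
  have ev2: "eventually (\<lambda>N. N \<ge> s) sequentially" by (rule eventually_ge_at_top)
  have "eventually (\<lambda>N. norm (E_alpha (a N) N k (\<lambda>M. real (indeg N k M (jn N)) ^ s)
              - E_unif N k (\<lambda>M. real (indeg N k M (jn N)) ^ s)) \<le> K * norm (1 / a N)) sequentially"
    using ev1 ev2
  proof eventually_elim
    case (elim N)
    have N1: "N \<ge> 1" using elim s by simp
    have jN: "jn N \<in> {1..N}" using jn N1 by simp
    have ap: "a N > 0" using apos by simp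
    have eq: "E_alpha (a N) N k (\<lambda>M. real (indeg N k M (jn N)) ^ s)
              - E_unif N k (\<lambda>M. real (indeg N k M (jn N)) ^ s)
        = (\<Sum>l=1..s. real (Stirling s l) * (pochhammer (a N) l * falling (real (k * N)) l / pochhammer (a N * real N) l
              - falling (real (k * N)) l / real N ^ l))"
      unfolding E_alpha_pow[OF ap N1 jN s] E_unif_pow[OF N1 jN s] sum_subtractf[symmetric]
      by (rule sum.cong[OF refl], simp only: right_diff_distrib times_divide_eq_right mult.assoc)
    have "\<bar>(\<Sum>l=1..s. real (Stirling s l) * (pochhammer (a N) l * falling (real (k * N)) l / pochhammer (a N * real N) l
              - falling (real (k * N)) l / real N ^ l))\<bar> \<le> (\<Sum>l=1..s. real (Stirling s l) * \<bar>pochhammer (a N) l * falling (real (k * N)) l / pochhammer (a N * real N) l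
              - falling (real (k * N)) l / real N ^ l\<bar>)"
      by (rule order.trans[OF sum_abs]) (simp add: abs_mult)
    also have "\<dots> \<le> (\<Sum>l=1..s. real (Stirling s l) * (real k ^ l * (D l / a N)))"
    proof (rule sum_mono)
      fix l assume l: "l \<in> {1..s}"
      then have lN: "N \<ge> l" using elim(2) by simp
      note c = C[OF lN N1] and d = D[OF elim(1) N1, of l]
      have t: "\<bar>pochhammer (a N) l * falling (real (k * N)) l / pochhammer (a N * real N) l
              - falling (real (k * N)) l / real N ^ l\<bar> \<le> real k ^ l * (D l / a N)"
        by (rule termv[OF elim(1) N1 c[THEN conjunct1] c[THEN conjunct2, THEN conjunct1] d[THEN conjunct1] d[THEN conjunct2]])
      show "real (Stirling s l) * \<bar>pochhammer (a N) l * falling (real (k * N)) l / pochhammer (a N * real N) l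
              - falling (real (k * N)) l / real N ^ l\<bar> \<le> real (Stirling s l) * (real k ^ l * (D l / a N))"
        by (rule mult_left_mono[OF t]) simp
    qed
    also have "\<dots> = K * norm (1 / a N)"
    proof -
      have n: "norm (1 / a N) = 1 / a N" using ap by simp
      show ?thesis unfolding n K_def sum_distrib_right by (rule sum.cong[OF refl]) simp
    qed
    finally have "\<bar>(\<Sum>l=1..s. real (Stirling s l) * (pochhammer (a N) l * falling (real (k * N)) l / pochhammer (a N * real N) l
              - falling (real (k * N)) l / real N ^ l))\<bar> \<le> K * norm (1 / a N)" .
    then show ?case by (simp only: real_norm_def eq)
  qed
  then show "(\<lambda>N. E_alpha (a N) N k (\<lambda>M. real (indeg N k M (jn N)) ^ s)
              - E_unif N k (\<lambda>M. real (indeg N k M (jn N)) ^ s)) \<in> O(\<lambda>N. 1 / a N)"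
    by (rule bigoI)
qed

lemma part_vi:
  fixes k s :: nat
  assumes k: "k \<ge> 1" and s: "s \<ge> 1"
  shows "\<forall>jn :: nat \<Rightarrow> nat. (\<forall>N\<ge>1. jn N \<in> {1..N}) \<longrightarrow>
        (\<lambda>N. E_unif N k (\<lambda>M. real (indeg N k M (jn N)) ^ s)
              - (\<Sum>l'=1..s. real (Stirling s l') * real k ^ l')) \<in> O(\<lambda>N. 1 / real N)"
proof (intro allI impI)
  fix jn :: "nat \<Rightarrow> nat"
  assume jn: "\<forall>N\<ge>1. jn N \<in> {1..N}"
  have "\<forall>l. \<exists>C. \<forall>N::nat. N \<ge> l \<longrightarrow> N \<ge> 1 \<longrightarrow>
     0 \<le> falling (real (k*N)) l / real N ^ l \<and> falling (real (k*N)) l / real N ^ l \<le> real k ^ l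
     \<and> \<bar>falling (real (k*N)) l / real N ^ l - real k ^ l\<bar> \<le> C / real N"
    by (rule allI, rule bA[OF k])
  then have "\<exists>C. \<forall>l. \<forall>N::nat. N \<ge> l \<longrightarrow> N \<ge> 1 \<longrightarrow>
     0 \<le> falling (real (k*N)) l / real N ^ l \<and> falling (real (k*N)) l / real N ^ l \<le> real k ^ l
     \<and> \<bar>falling (real (k*N)) l / real N ^ l - real k ^ l\<bar> \<le> C l / real N"
    by (rule choice)
  then obtain C where C0: "\<forall>l. \<forall>N::nat. N \<ge> l \<longrightarrow> N \<ge> 1 \<longrightarrow>
     0 \<le> falling (real (k*N)) l / real N ^ l \<and> falling (real (k*N)) l / real N ^ l \<le> real k ^ l
     \<and> \<bar>falling (real (k*N)) l / real N ^ l - real k ^ l\<bar> \<le> C l / real N"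
    by (rule exE)
  note C' = C0[rule_format]
  define K where "K = (\<Sum>l=1..s. real (Stirling s l) * C l)"
  have "eventually (\<lambda>N. N \<ge> s) sequentially" by (rule eventually_ge_at_top)
  then have "eventually (\<lambda>N. norm (E_unif N k (\<lambda>M. real (indeg N k M (jn N)) ^ s)
              - (\<Sum>l'=1..s. real (Stirling s l') * real k ^ l')) \<le> K * norm (1 / real N)) sequentially"
  proof eventually_elim
    case (elim N)
    have N1: "N \<ge> 1" using elim s by simp
    have jN: "jn N \<in> {1..N}" using jn N1 by simp
    have eq: "E_unif N k (\<lambda>M. real (indeg N k M (jn N)) ^ s) - (\<Sum>l'=1..s. real (Stirling s l') * real k ^ l')
        = (\<Sum>l=1..s. real (Stirling s l) * (falling (real (k * N)) l / real N ^ l - real k ^ l))"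
      unfolding E_unif_pow[OF N1 jN s] sum_subtractf[symmetric]
      by (rule sum.cong[OF refl], simp only: right_diff_distrib times_divide_eq_right mult.assoc)
    have "\<bar>(\<Sum>l=1..s. real (Stirling s l) * (falling (real (k * N)) l / real N ^ l - real k ^ l))\<bar> \<le> (\<Sum>l=1..s. real (Stirling s l) * \<bar>falling (real (k * N)) l / real N ^ l - real k ^ l\<bar>)"
      by (rule order.trans[OF sum_abs]) (simp add: abs_mult)
    also have "\<dots> \<le> (\<Sum>l=1..s. real (Stirling s l) * (C l / real N))"
    proof (rule sum_mono, rule mult_left_mono)
      fix l assume l: "l \<in> {1..s}"
      then have lN: "N \<ge> l" using elim by simp
      show "\<bar>falling (real (k * N)) l / real N ^ l - real k ^ l\<bar> \<le> C l / real N"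
        by (rule C'[OF lN N1, THEN conjunct2, THEN conjunct2])
    qed simp
    also have "\<dots> = K * norm (1 / real N)"
    proof -
      have n: "norm (1 / real N) = 1 / real N" by simp
      show ?thesis unfolding n K_def sum_distrib_right by (rule sum.cong[OF refl]) simp
    qed
    finally have "\<bar>(\<Sum>l=1..s. real (Stirling s l) * (falling (real (k * N)) l / real N ^ l - real k ^ l))\<bar> \<le> K * norm (1 / real N)" .
    then show ?case by (simp only: real_norm_def eq)
  qed
  then show "(\<lambda>N. E_unif N k (\<lambda>M. real (indeg N k M (jn N)) ^ s)
              - (\<Sum>l'=1..s. real (Stirling s l') * real k ^ l')) \<in> O(\<lambda>N. 1 / real N)"
    by (rule bigoI)
qed


theorem corollary1:
  fixes \<alpha> :: real and n k i j l m s :: nat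
  assumes "\<alpha> > 0" and "n \<ge> 1" and "k \<ge> 1" and "s \<ge> 1"
    and "i \<in> {1..n}" and "j \<in> {1..n}" and "i \<noteq> j"
  shows
    "((\<lambda>d. Z_pmf \<alpha> k d * falling (real d) l)
        sums (pochhammer \<alpha> l * real k ^ l / \<alpha> ^ l))
   \<and> ((\<lambda>d. Z_pmf \<alpha> k d * real d ^ s)
        sums (\<Sum>l'=1..s. real (Stirling s l') * (pochhammer \<alpha> l' * real k ^ l' / \<alpha> ^ l')))
   \<and> E_alpha \<alpha> n k (\<lambda>M. falling (real (indeg n k M j)) l)
       = pochhammer \<alpha> l * falling (real (k * n)) l / pochhammer (\<alpha> * real n) l
   \<and> E_unif n k (\<lambda>M. falling (real (indeg n k M j)) l)
       = falling (real (k * n)) l / real n ^ l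
   \<and> E_alpha \<alpha> n k (\<lambda>M. real (indeg n k M j) ^ s)
       = (\<Sum>l'=1..s. real (Stirling s l') * pochhammer \<alpha> l' * falling (real (k * n)) l'
                       / pochhammer (\<alpha> * real n) l')
   \<and> E_unif n k (\<lambda>M. real (indeg n k M j) ^ s)
       = (\<Sum>l'=1..s. real (Stirling s l') * falling (real (k * n)) l' / real n ^ l')
   \<and> E_alpha \<alpha> n k (\<lambda>M. falling (real (indeg n k M i)) l * falling (real (indeg n k M j)) m)
       = pochhammer \<alpha> l * pochhammer \<alpha> m * falling (real (k * n)) (l + m)
           / pochhammer (\<alpha> * real n) (l + m)
   \<and> E_unif n k (\<lambda>M. falling (real (indeg n k M i)) l * falling (real (indeg n k M j)) m)
       = falling (real (k * n)) (l + m) / real n ^ (l + m)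
   \<and> (\<forall>a :: nat \<Rightarrow> real. \<forall>jn :: nat \<Rightarrow> nat.
        (\<forall>N. a N > 0) \<longrightarrow> filterlim a at_top sequentially \<longrightarrow> (\<forall>N\<ge>1. jn N \<in> {1..N}) \<longrightarrow>
        (\<lambda>N. E_alpha (a N) N k (\<lambda>M. real (indeg N k M (jn N)) ^ s)
              - E_unif N k (\<lambda>M. real (indeg N k M (jn N)) ^ s)) \<in> O(\<lambda>N. 1 / a N))
   \<and> (\<forall>jn :: nat \<Rightarrow> nat. (\<forall>N\<ge>1. jn N \<in> {1..N}) \<longrightarrow>
        (\<lambda>N. E_unif N k (\<lambda>M. real (indeg N k M (jn N)) ^ s)
              - (\<Sum>l'=1..s. real (Stirling s l') * real k ^ l')) \<in> O(\<lambda>N. 1 / real N))"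
  proof -
  have ij: "0 < l \<Longrightarrow> i \<in> {1..n}" using assms(5) by simp
  show ?thesis
    apply (intro conjI)
             apply (rule Z_falling[OF assms(1,3)])
            apply (rule Z_pow[OF assms(1,3,4)])
           apply (rule E_alpha_single[OF assms(1,2,6)])
          apply (rule E_unif_single[OF assms(2,6)])
         apply (rule E_alpha_pow[OF assms(1,2,6,4)])
        apply (rule E_unif_pow[OF assms(2,6,4)])
       apply (rule E_alpha_pair[OF assms(1,2,7,6)], rule assms(5))
      apply (rule E_unif_pair[OF assms(2,7,6)], rule assms(5))
     apply (rule part_v[OF assms(3,4)])
    apply (rule part_vi[OF assms(3,4)])
    done
qed

end
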